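(* Let $\mathcal S$ and $\Sigma$ be two finite fundamental systems, generating the groups $G$ and $\Gamma$ respectively. Assume there exist an orientation preserving homeomorphism $h:[0,1]\to[0,1]$ and a bijection $\varphi:\mathcal S\to\Sigma$, written $\varphi(f,S_f,I_f)=(\varphi(f),S_{\varphi(f)},I_{\varphi(f)})$, such that for every $(f,S_f,I_f)\in\mathcal S$ one has $S_{\varphi(f)}=h(S_f)$ and $I_{\varphi(f)}=h(I_f)$. Then there is a homeomorphism $\tilde h:[0,1]\to[0,1]$ such that $\tilde h f\tilde h^{-1}=\varphi(f)$ for every $(f,S_f,I_f)\in\mathcal S$; in particular $\Gamma=\{\tilde h g\tilde h^{-1}: g\in G\}$.
   Context: A homeomorphism $f$ of $[0,1]$ is simple if $[0,1]\setminus\mathrm{Fix}(f)$ has exactly one connected component; its closure is the support $S_f$ of $f$. It is positive if $f(x)\ge x$ for all $x$. A fundamental domain of a simple $f$ is a segment $[x,f(x)]$ with $x$ in the interior of $S_f$. A fundamental system is a family $\mathcal S$ of triples $(f,S_f,I_f)$ such that each $f$ is a simple positive homeomorphism of $[0,1]$, $S_f$ is its support and $I_f\subset S_f$ is a fundamental domain of $f$, and for any two distinct triples in $\mathcal S$: either $S_f$ and $S_g$ have disjoint interiors, or $S_f\subset I_g$, or $S_g\subset I_f$. *)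

theory Defs
  imports "HOL-Analysis.Analysis" "HOL-Library.FuncSet"
begin

text \<open>Homeomorphisms of [0,1] are represented by functions real => real; only their
values on {0..1} matter.\<close>

definition hom01 :: "(real \<Rightarrow> real) \<Rightarrow> bool" where
  "hom01 f \<longleftrightarrow> (\<exists>g. homeomorphism {0..1} {0..1} f g)"

definition orient_pres_hom01 :: "(real \<Rightarrow> real) \<Rightarrow> bool" where
  "orient_pres_hom01 h \<longleftrightarrow> hom01 h \<and> mono_on {0..1} h"

definition Fix01 :: "(real \<Rightarrow> real) \<Rightarrow> real set" where
  "Fix01 f = {x \<in> {0..1}. f x = x}"

definition simple_hom :: "(real \<Rightarrow> real) \<Rightarrow> bool" where
  "simple_hom f \<longleftrightarrow> hom01 f \<and> (\<exists>C. components ({0..1} - Fix01 f) = {C})"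

definition support01 :: "(real \<Rightarrow> real) \<Rightarrow> real set" where
  "support01 f = closure ({0..1} - Fix01 f)"

definition positive_hom :: "(real \<Rightarrow> real) \<Rightarrow> bool" where
  "positive_hom f \<longleftrightarrow> (\<forall>x\<in>{0..1}. x \<le> f x)"

definition fundamental_domain :: "(real \<Rightarrow> real) \<Rightarrow> real set \<Rightarrow> bool" where
  "fundamental_domain f I \<longleftrightarrow> (\<exists>x \<in> interior (support01 f). I = {x..f x})"

type_synonym triple = "(real \<Rightarrow> real) \<times> real set \<times> real set"

definition fundamental_system :: "triple set \<Rightarrow> bool" where
  "fundamental_system \<S> \<longleftrightarrow>
     (\<forall>(f, S, I) \<in> \<S>. simple_hom f \<and> positive_hom f \<and> S = support01 f
                        \<and> I \<subseteq> S \<and> fundamental_domain f I) \<and>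
     (\<forall>t1 \<in> \<S>. \<forall>t2 \<in> \<S>. t1 \<noteq> t2 \<longrightarrow>
        (let S1 = fst (snd t1); I1 = snd (snd t1); S2 = fst (snd t2); I2 = snd (snd t2) in
          interior S1 \<inter> interior S2 = {} \<or> S1 \<subseteq> I2 \<or> S2 \<subseteq> I1))"

inductive_set gen_group :: "(real \<Rightarrow> real) set \<Rightarrow> (real \<Rightarrow> real) set" for F where
  gen_id: "restrict id {0..1} \<in> gen_group F"
| gen_mul: "f \<in> F \<Longrightarrow> g \<in> gen_group F \<Longrightarrow> restrict (f \<circ> g) {0..1} \<in> gen_group F"
| gen_inv: "f \<in> F \<Longrightarrow> g \<in> gen_group F \<Longrightarrow>
            restrict (inv_into {0..1} f \<circ> g) {0..1} \<in> gen_group F"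

end

theory Submission
  imports Defs
begin


lemma sm_sub_image:
  fixes g :: "real \<Rightarrow> real"
  assumes sm: "strict_mono_on {p..q} g" and im: "g ` {p..q} = {r..s}"
    and u: "p \<le> u" "u \<le> v" "v \<le> q"
  shows "g ` {u..v} = {g u..g v}"
proof
  show "g ` {u..v} \<subseteq> {g u..g v}"
    using u by (auto intro!: strict_mono_on_leD[OF sm])
next
  show "{g u..g v} \<subseteq> g ` {u..v}"
  proof
    fix t assume t: "t \<in> {g u..g v}"
    have "g u \<in> {r..s}" "g v \<in> {r..s}" using im u by auto
    then have "t \<in> g ` {p..q}" using t im by auto
    then obtain z where z: "z \<in> {p..q}" "t = g z" by auto
    have "\<not> z < u" using strict_mono_onD[OF sm, of z u] z t u by auto
    moreover have "\<not> v < z" using strict_mono_onD[OF sm, of v z] z t u by auto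
    ultimately show "t \<in> g ` {u..v}" using z by auto
  qed
qed

lemma sm_endpoints:
  fixes g :: "real \<Rightarrow> real"
  assumes sm: "strict_mono_on {p..q} g" and im: "g ` {p..q} = {r..s}" and pq: "p \<le> q"
  shows "g p = r \<and> g q = s"
proof -
  have "g ` {p..q} = {g p..g q}" using sm_sub_image[OF sm im] pq by auto
  then have e: "{g p..g q} = {r..s}" using im by (metis)
  have "g p \<le> g q" using strict_mono_on_leD[OF sm] pq by auto
  then show ?thesis using e
    by (metis atLeastAtMost_iff atLeastatMost_empty_iff2 order_antisym order_refl)
qed

lemma sm_cont:
  fixes g :: "real \<Rightarrow> real"
  assumes sm: "strict_mono_on {p..q} g" and im: "g ` {p..q} = {r..s}" and pq: "p \<le> q"
  shows "continuous_on {p..q} g"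
  unfolding continuous_on_iff
proof (intro ballI allI impI)
  fix z e assume z: "z \<in> {p..q}" and e: "(0::real) < e"
  have ep: "g p = r" "g q = s" using sm_endpoints[OF sm im pq] by auto
  have lo: "\<exists>d1>0. \<forall>t\<in>{p..q}. z - d1 < t \<longrightarrow> g z - e < g t"
  proof (cases "g z - e < r")
    case True
    then show ?thesis using im by (intro exI[of _ 1]) force
  next
    case False
    then have "g z - e \<in> g ` {p..q}" using im z ep strict_mono_on_leD[OF sm, of z q] e by auto
    then obtain u where u: "u \<in> {p..q}" "g u = g z - e" by auto
    have "u < z" using strict_mono_on_less[OF sm u(1) z] u e by simp
    show ?thesis
    proof (intro exI[of _ "z - u"] conjI ballI impI)
      show "0 < z - u" using \<open>u < z\<close> by simp
      fix t assume "t \<in> {p..q}" "z - (z - u) < t"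
      then show "g z - e < g t" using strict_mono_onD[OF sm u(1), of t] u by auto
    qed
  qed
  have hi: "\<exists>d2>0. \<forall>t\<in>{p..q}. t < z + d2 \<longrightarrow> g t < g z + e"
  proof (cases "g z + e > s")
    case True
    then show ?thesis using im by (intro exI[of _ 1]) force
  next
    case False
    then have "g z + e \<in> g ` {p..q}" using im z ep strict_mono_on_leD[OF sm, of p z] e by auto
    then obtain u where u: "u \<in> {p..q}" "g u = g z + e" by auto
    have "z < u" using strict_mono_on_less[OF sm z u(1)] u e by simp
    show ?thesis
    proof (intro exI[of _ "u - z"] conjI ballI impI)
      show "0 < u - z" using \<open>z < u\<close> by simp
      fix t assume "t \<in> {p..q}" "t < z + (u - z)"
      then show "g t < g z + e" using strict_mono_onD[OF sm _ u(1), of t] u by auto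
    qed
  qed
  from lo hi obtain d1 d2 where d: "d1 > 0" "d2 > 0"
    "\<forall>t\<in>{p..q}. z - d1 < t \<longrightarrow> g z - e < g t" "\<forall>t\<in>{p..q}. t < z + d2 \<longrightarrow> g t < g z + e"
    by blast
  show "\<exists>d>0. \<forall>x'\<in>{p..q}. dist x' z < d \<longrightarrow> dist (g x') (g z) < e"
    using d by (intro exI[of _ "min d1 d2"]) (auto simp: dist_real_def abs_less_iff)
qed



locale shift =
  fixes f :: "real \<Rightarrow> real" and a b :: real
  assumes ab: "a < b" and sm: "strict_mono_on {a..b} f" and surj: "f ` {a..b} = {a..b}"
    and pos: "\<And>z. a < z \<Longrightarrow> z < b \<Longrightarrow> z < f z"
begin

definition fi where "fi = inv_into {a..b} f"

lemma inj: "inj_on f {a..b}" using strict_mono_on_imp_inj_on[OF sm] .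

lemma f_in: "z \<in> {a..b} \<Longrightarrow> f z \<in> {a..b}" using surj by auto
lemma fi_in: "z \<in> {a..b} \<Longrightarrow> fi z \<in> {a..b}"
  unfolding fi_def by (metis inv_into_into surj)
lemma f_fi: "z \<in> {a..b} \<Longrightarrow> f (fi z) = z"
  unfolding fi_def by (metis f_inv_into_f surj)
lemma fi_f: "z \<in> {a..b} \<Longrightarrow> fi (f z) = z"
  unfolding fi_def using inj by (simp add: inv_into_f_f)

lemma fi_sm: "strict_mono_on {a..b} fi"
proof (rule strict_mono_onI)
  fix r s assume "r \<in> {a..b}" "s \<in> {a..b}" "r < s"
  then show "fi r < fi s"
    using strict_mono_on_leD[OF sm, of "fi s" "fi r"] fi_in f_fi by force
qed

lemma fa: "f a = a"
proof -
  obtain u where u: "u \<in> {a..b}" "f u = a" using surj ab by (metis atLeastAtMost_iff image_iff order_refl less_imp_le)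
  have "f a \<le> f u" using strict_mono_on_leD[OF sm, of a u] u ab by auto
  moreover have "f a \<ge> a" using f_in[of a] ab by auto
  ultimately show ?thesis using u by auto
qed

lemma fb: "f b = b"
proof -
  obtain u where u: "u \<in> {a..b}" "f u = b" using surj ab by (metis atLeastAtMost_iff image_iff order_refl less_imp_le)
  have "f u \<le> f b" using strict_mono_on_leD[OF sm, of u b] u ab by auto
  moreover have "f b \<le> b" using f_in[of b] ab by auto
  ultimately show ?thesis using u by auto
qed

definition it :: "int \<Rightarrow> real \<Rightarrow> real" where
  "it n = (if 0 \<le> n then f ^^ nat n else fi ^^ nat (- n))"

lemma fpow_in: "z \<in> {a..b} \<Longrightarrow> (f ^^ n) z \<in> {a..b}"
  by (induction n) (simp_all add: f_in del: atLeastAtMost_iff)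
lemma fipow_in: "z \<in> {a..b} \<Longrightarrow> (fi ^^ n) z \<in> {a..b}"
  by (induction n) (simp_all add: fi_in del: atLeastAtMost_iff)

lemma it_in: "z \<in> {a..b} \<Longrightarrow> it n z \<in> {a..b}"
  unfolding it_def using fpow_in fipow_in by auto

lemma it_0[simp]: "it 0 z = z" unfolding it_def by simp

lemma it_succ: assumes z: "z \<in> {a..b}" shows "it (n + 1) z = f (it n z)"
proof (cases "0 \<le> n")
  case True
  then have "nat (n + 1) = Suc (nat n)" by simp
  then show ?thesis using True unfolding it_def by simp
next
  case False
  then have n1: "nat (- n) = Suc (nat (- (n + 1)))" by simp
  show ?thesis
  proof (cases "n + 1 = 0")
    case True
    then have "n = -1" by simp
    then show ?thesis unfolding it_def using f_fi z by simp
  next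
    case False2: False
    then have "\<not> 0 \<le> n + 1" using False by simp
    then have "it n z = fi (it (n+1) z)" using False n1 unfolding it_def by simp
    then show ?thesis using f_fi it_in z by simp
  qed
qed

lemma it_pred: "z \<in> {a..b} \<Longrightarrow> it (n - 1) z = fi (it n z)"
  using it_succ[of z "n - 1"] fi_f it_in by simp

lemma it_add: "z \<in> {a..b} \<Longrightarrow> it (m + n) z = it m (it n z)"
proof (induction m rule: int_induct[where k = 0])
  case base then show ?case by simp
next
  case (step1 i)
  then show ?case using it_succ[of z "i + n"] it_succ[of "it n z" i] it_in
    by (simp add: algebra_simps)
next
  case (step2 i)
  then show ?case using it_pred[of z "i + n"] it_pred[of "it n z" i] it_in
    by (smt (verit))
qed

lemma it_less: "z \<in> {a..b} \<Longrightarrow> w \<in> {a..b} \<Longrightarrow> z < w \<Longrightarrow> it n z < it n w"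
proof (induction n rule: int_induct[where k = 0])
  case base then show ?case by simp
next
  case (step1 i)
  then show ?case using it_succ it_in strict_mono_onD[OF sm] by metis
next
  case (step2 i)
  then show ?case using it_pred it_in strict_mono_onD[OF fi_sm] by metis
qed

lemma it_sm: "strict_mono_on {a..b} (it n)"
  by (rule strict_mono_onI) (rule it_less)

lemma it_a: "it n a = a"
proof (induction n rule: int_induct[where k = 0])
  case base then show ?case by simp
next
  case (step1 i) then show ?case using it_succ[of a i] fa ab by simp
next
  case (step2 i) then show ?case using it_pred[of a i] fi_f[of a] fa ab by simp
qed

lemma it_b: "it n b = b"
proof (induction n rule: int_induct[where k = 0])
  case base then show ?case by simp
next
  case (step1 i) then show ?case using it_succ[of b i] fb ab by simp
next
  case (step2 i) then show ?case using it_pred[of b i] fi_f[of b] fb ab by simp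
qed

lemma it_open: "a < z \<Longrightarrow> z < b \<Longrightarrow> a < it n z \<and> it n z < b"
  using it_less[of a z n] it_less[of z b n] it_a it_b ab by auto

lemma it_1: "z \<in> {a..b} \<Longrightarrow> it 1 z = f z" using it_succ[of z 0] by simp
lemma it_m1: "z \<in> {a..b} \<Longrightarrow> it (-1) z = fi z" using it_pred[of z 0] by simp

end



context shift begin

lemma P_step: "a < x \<Longrightarrow> x < b \<Longrightarrow> it n x < it (n + 1) x"
  using it_succ[of x n] pos it_open[of x n] by auto

lemma P_mono_aux: "a < x \<Longrightarrow> x < b \<Longrightarrow> it n x < it (n + int (Suc k)) x"
proof (induction k)
  case 0 then show ?case using P_step by simp
next
  case (Suc k)
  then show ?case using P_step[of x "n + int (Suc k)"] by (simp add: add.assoc)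
qed

lemma P_less: "a < x \<Longrightarrow> x < b \<Longrightarrow> n < m \<Longrightarrow> it n x < it m x"
  using P_mono_aux[of x n "nat (m - n - 1)"] by simp

lemma P_less_iff: "a < x \<Longrightarrow> x < b \<Longrightarrow> it n x < it m x \<longleftrightarrow> n < m"
  using P_less[of x n m] P_less[of x m n] by (cases n m rule: linorder_cases) auto

lemma P_le_iff: "a < x \<Longrightarrow> x < b \<Longrightarrow> it n x \<le> it m x \<longleftrightarrow> n \<le> m"
  using P_less_iff[of x m n] by (simp add: not_less[symmetric])

lemma exists_above:
  assumes x: "a < x" "x < b" and z: "a < z" "z < b"
  shows "\<exists>n. z < it n x"
proof (rule ccontr)
  assume "\<not> ?thesis"
  then have le: "\<And>n. it n x \<le> z" by (simp add: not_less)
  define L where "L = Sup (range (\<lambda>n::nat. it (int n) x))"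
  have bdd: "bdd_above (range (\<lambda>n::nat. it (int n) x))" using le by (intro bdd_aboveI[of _ z]) auto
  have up: "\<And>n::nat. it (int n) x \<le> L" unfolding L_def using bdd by (auto intro: cSup_upper)
  have "L \<le> z" unfolding L_def using le by (auto intro: cSup_least)
  have "x \<le> L" using up[of 0] by simp
  have Lab: "L \<in> {a..b}" using \<open>L \<le> z\<close> \<open>x \<le> L\<close> x z by auto
  have "L < f L" using pos \<open>L \<le> z\<close> \<open>x \<le> L\<close> x z by auto
  define u where "u = fi L"
  have u: "u \<in> {a..b}" "f u = L" using fi_in f_fi Lab u_def by auto
  have "u < L"
  proof (rule ccontr)
    assume "\<not> u < L"
    then have "f L \<le> f u" using strict_mono_on_leD[OF sm Lab u(1)] by simp
    then show False using u \<open>L < f L\<close> by simp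
  qed
  then obtain n :: nat where n: "u < it (int n) x"
    unfolding L_def using less_cSup_iff[of "range (\<lambda>n::nat. it (int n) x)" u] bdd by auto
  have xin: "x \<in> {a..b}" using x by auto
  have "f u < f (it (int n) x)" using strict_mono_onD[OF sm u(1) it_in[OF xin] n] .
  also have "\<dots> = it (int (Suc n)) x" using it_succ[OF xin, of "int n"] by (simp add: add.commute)
  also have "\<dots> \<le> L" by (rule up)
  finally show False using u by simp
qed

lemma exists_below:
  assumes x: "a < x" "x < b" and z: "a < z" "z < b"
  shows "\<exists>n. it n x \<le> z"
proof (rule ccontr)
  assume "\<not> ?thesis"
  then have gt: "\<And>n. z < it n x" by (simp add: not_le)
  define L where "L = Inf (range (\<lambda>n::nat. it (- int n) x))"
  have bdd: "bdd_below (range (\<lambda>n::nat. it (- int n) x))" using gt by (intro bdd_belowI[of _ z]) (auto intro: less_imp_le)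
  have lo: "\<And>n::nat. L \<le> it (- int n) x" unfolding L_def using bdd by (auto intro: cInf_lower)
  have "z \<le> L" unfolding L_def using gt by (auto intro: cInf_greatest less_imp_le)
  have "L \<le> x" using lo[of 0] by simp
  have Lab: "L \<in> {a..b}" using \<open>z \<le> L\<close> \<open>L \<le> x\<close> x z by auto
  have "L < f L" using pos \<open>z \<le> L\<close> \<open>L \<le> x\<close> x z by auto
  then obtain n :: nat where n: "it (- int n) x < f L"
    using cInf_less_iff[of "range (\<lambda>n::nat. it (- int n) x)" "f L"] bdd unfolding L_def[symmetric] by auto
  have xin: "x \<in> {a..b}" using x by auto
  have "fi (it (- int n) x) < fi (f L)"
    using strict_mono_onD[OF fi_sm it_in[OF xin] f_in[OF Lab] n] .
  moreover have "it (- int (Suc n)) x = fi (it (- int n) x)"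
  proof -
    have "- int (Suc n) = - int n - 1" by simp
    then show ?thesis by (metis it_pred[OF xin])
  qed
  ultimately have "it (- int (Suc n)) x < L" using fi_f[OF Lab] by metis
  then show False using lo[of "Suc n"] by simp
qed

lemma N_ex:
  assumes x: "a < x" "x < b" and z: "a < z" "z < b"
  shows "\<exists>n. it n x \<le> z \<and> z < it (n + 1) x"
proof -
  obtain m where m: "it m x \<le> z" using exists_below[OF x z] by blast
  obtain m' where m': "z < it m' x" using exists_above[OF x z] by blast
  have "\<forall>k::nat. z < it (m + int k) x \<longrightarrow> (\<exists>n. it n x \<le> z \<and> z < it (n + 1) x)"
  proof
    fix k :: nat show "z < it (m + int k) x \<longrightarrow> (\<exists>n. it n x \<le> z \<and> z < it (n + 1) x)"
    proof (induction k)
      case 0 then show ?case using m by simp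
    next
      case (Suc k)
      show ?case
      proof
        assume h: "z < it (m + int (Suc k)) x"
        show "\<exists>n. it n x \<le> z \<and> z < it (n + 1) x"
        proof (cases "z < it (m + int k) x")
          case True then show ?thesis using Suc by blast
        next
          case False
          moreover have "m + int (Suc k) = (m + int k) + 1" by simp
          ultimately show ?thesis using h by (intro exI[of _ "m + int k"]) (simp only:, simp)
        qed
      qed
    qed
  qed
  moreover have "m < m'" using m m' P_le_iff[OF x, of m' m] by (meson leI order.trans not_less)
  moreover have "m + int (nat (m' - m)) = m'" using calculation(2) by simp
  ultimately show ?thesis using m' by metis
qed

lemma N_unique:
  assumes x: "a < x" "x < b"
    and n: "it n x \<le> z" "z < it (n + 1) x" and m: "it m x \<le> z" "z < it (m + 1) x"
  shows "n = m"
proof -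
  have "n < m + 1" using n m P_less_iff[OF x, of n "m+1"] by auto
  moreover have "m < n + 1" using n m P_less_iff[OF x, of m "n+1"] by auto
  ultimately show ?thesis by simp
qed

definition N :: "real \<Rightarrow> real \<Rightarrow> int" where
  "N x z = (THE n. it n x \<le> z \<and> z < it (n + 1) x)"

lemma N_eq:
  assumes x: "a < x" "x < b" and n: "it n x \<le> z" "z < it (n + 1) x"
  shows "N x z = n"
  unfolding N_def
proof (rule the_equality)
  show "it n x \<le> z \<and> z < it (n + 1) x" using n by simp
  fix m assume "it m x \<le> z \<and> z < it (m + 1) x"
  then show "m = n" using N_unique[OF x n, of m] by simp
qed

lemma N_prop:
  assumes x: "a < x" "x < b" and z: "a < z" "z < b"
  shows "it (N x z) x \<le> z \<and> z < it (N x z + 1) x"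
proof -
  obtain n where n: "it n x \<le> z" "z < it (n + 1) x" using N_ex[OF x z] by blast
  then show ?thesis using N_eq[OF x n] by simp
qed

lemma back_in:
  assumes x: "a < x" "x < b" and n: "it n x \<le> z" "z < it (n + 1) x"
  shows "x \<le> it (- n) z \<and> it (- n) z < f x"
proof -
  have xin: "x \<in> {a..b}" using x by auto
  have zin: "z \<in> {a..b}" using n it_in[OF xin, of n] it_in[OF xin, of "n+1"] by auto
  have "it (- n) (it n x) = x" using it_add[OF xin, of "- n" n] by simp
  moreover have "it (- n) (it (n+1) x) = f x" using it_add[OF xin, of "- n" "n + 1"] it_1[OF xin] by simp
  moreover have "it (-n) (it n x) \<le> it (-n) z"
    using strict_mono_on_leD[OF it_sm it_in[OF xin] zin n(1)] .
  moreover have "it (-n) z < it (-n) (it (n+1) x)"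
    using strict_mono_onD[OF it_sm zin it_in[OF xin] n(2)] .
  ultimately show ?thesis by simp
qed

end


lemma conj_ext:
  assumes F: "shift f a b" and G: "shift g c d"
    and x: "a < x" "x < b" and y: "c < y" "y < d"
    and ksm: "strict_mono_on {x..f x} k" and kim: "k ` {x..f x} = {y..g y}"
  shows "\<exists>K. strict_mono_on {a..b} K \<and> K ` {a..b} = {c..d} \<and> (\<forall>z\<in>{x..f x}. K z = k z)
           \<and> (\<forall>z\<in>{a..b}. K (f z) = g (K z))"
proof -
  interpret F: shift f a b by (rule F)
  interpret G: shift g c d by (rule G)
  have xin: "x \<in> {a..b}" and yin: "y \<in> {c..d}" using x y by auto
  have fx: "x < f x" "f x < b" using F.pos[OF x] F.it_open[OF x, of 1] F.it_1[OF xin] by auto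
  have gy: "y < g y" "g y < d" using G.pos[OF y] G.it_open[OF y, of 1] G.it_1[OF yin] by auto
  have kx: "k x = y" "k (f x) = g y" using sm_endpoints[OF ksm kim] fx by auto
  define K where "K z = (if z \<le> a then c else if b \<le> z then d
      else G.it (F.N x z) (k (F.it (- F.N x z) z)))" for z
  have Gsucc: "G.it (n + 1) y = G.it n (g y)" for n
    using G.it_add[OF yin, of n 1] G.it_1[OF yin] by simp
  have Fsucc: "F.it (n + 1) x = F.it n (f x)" for n
    using F.it_add[OF xin, of n 1] F.it_1[OF xin] by simp
  have piece: "K z = G.it n (k (F.it (- n) z)) \<and> x \<le> F.it (- n) z \<and> F.it (- n) z < f x
      \<and> y \<le> k (F.it (- n) z) \<and> k (F.it (- n) z) < g y
      \<and> G.it n y \<le> K z \<and> K z < G.it (n + 1) y \<and> c < K z \<and> K z < d"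
    if z: "a < z" "z < b" and n: "F.it n x \<le> z" "z < F.it (n + 1) x" for z n
  proof -
    have Nz: "F.N x z = n" using F.N_eq[OF x n] .
    have K: "K z = G.it n (k (F.it (- n) z))" unfolding K_def using z Nz by simp
    define w where "w = F.it (- n) z"
    have w: "x \<le> w" "w < f x" using F.back_in[OF x n] unfolding w_def by auto
    have kw: "y \<le> k w" "k w < g y"
      using strict_mono_on_leD[OF ksm, of x w] strict_mono_onD[OF ksm, of w "f x"] w kx fx by auto
    have kwin: "k w \<in> {c..d}" "g y \<in> {c..d}" using kw y gy by auto
    have "G.it n y \<le> G.it n (k w)" using strict_mono_on_leD[OF G.it_sm yin kwin(1) kw(1)] .
    moreover have "G.it n (k w) < G.it (n + 1) y"
      using strict_mono_onD[OF G.it_sm kwin kw(2)] Gsucc by simp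
    moreover have "c < G.it n y" "G.it (n + 1) y < d" using G.it_open[OF y] by auto
    ultimately show ?thesis using K w kw unfolding w_def by auto
  qed
  have inner: "c < K z \<and> K z < d" if z: "a < z" "z < b" for z
    using piece[OF z conjunct1[OF F.N_prop[OF x z]] conjunct2[OF F.N_prop[OF x z]]] by blast
  have Ka: "K a = c" and Kb: "K b = d" unfolding K_def using F.ab by auto
  have smK: "strict_mono_on {a..b} K"
  proof (rule strict_mono_onI)
    fix z w assume zin: "z \<in> {a..b}" and win: "w \<in> {a..b}" and zw: "z < w"
    show "K z < K w"
    proof (cases "z = a")
      case True
      then show ?thesis using Ka Kb inner[of w] zw win F.ab G.ab by (cases "w = b") auto
    next
      case za: False
      show ?thesis
      proof (cases "w = b")
        case True
        then show ?thesis using Kb inner[of z] zw zin za by auto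
      next
        case wb: False
        have z: "a < z" "z < b" and w: "a < w" "w < b" using zin win za wb zw by auto
        define n where "n = F.N x z"
        define m where "m = F.N x w"
        have nP: "F.it n x \<le> z" "z < F.it (n + 1) x" using F.N_prop[OF x z] unfolding n_def by auto
        have mP: "F.it m x \<le> w" "w < F.it (m + 1) x" using F.N_prop[OF x w] unfolding m_def by auto
        have pz: "K z = G.it n (k (F.it (- n) z))" "F.it (- n) z \<in> {x..f x}" "K z < G.it (n + 1) y"
          using piece[OF z nP] by auto
        have pw: "K w = G.it m (k (F.it (- m) w))" "F.it (- m) w \<in> {x..f x}" "G.it m y \<le> K w"
          using piece[OF w mP] by auto
        have "n < m + 1" using F.P_less_iff[OF x, of n "m + 1"] nP mP zw by auto
        then consider "n = m" | "n < m" by linarith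
        then show ?thesis
        proof cases
          case 1
          have zin': "z \<in> {a..b}" "w \<in> {a..b}" using z w by auto
          have "F.it (- n) z < F.it (- n) w" using strict_mono_onD[OF F.it_sm zin' zw] .
          then have "k (F.it (- n) z) < k (F.it (- n) w)"
            using strict_mono_onD[OF ksm pz(2)] pw(2) 1 by auto
          moreover have "k (F.it (- n) z) \<in> {c..d}" "k (F.it (- n) w) \<in> {c..d}"
            using piece[OF z nP] piece[OF w mP] 1 y gy by auto
          ultimately show ?thesis using strict_mono_onD[OF G.it_sm] pz pw 1 by auto
        next
          case 2
          then have "n + 1 \<le> m" by simp
          then have "G.it (n + 1) y \<le> G.it m y" using G.P_le_iff[OF y] by simp
          then show ?thesis using pz pw by linarith
        qed
      qed
    qed
  qed
  have imK: "K ` {a..b} = {c..d}"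
  proof
    show "K ` {a..b} \<subseteq> {c..d}"
    proof
      fix t assume "t \<in> K ` {a..b}"
      then obtain z where z: "z \<in> {a..b}" "t = K z" by auto
      then show "t \<in> {c..d}" using Ka Kb inner[of z] G.ab by (cases "z = a"; cases "z = b") auto
    qed
  next
    show "{c..d} \<subseteq> K ` {a..b}"
    proof
      fix t assume t: "t \<in> {c..d}"
      show "t \<in> K ` {a..b}"
      proof (cases "t = c \<or> t = d")
        case True then show ?thesis using Ka Kb F.ab by (metis atLeastAtMost_iff image_eqI order_refl less_imp_le)
      next
        case False
        then have tt: "c < t" "t < d" using t by auto
        define m where "m = G.N y t"
        have mP: "G.it m y \<le> t" "t < G.it (m + 1) y" using G.N_prop[OF y tt] unfolding m_def by auto
        define t' where "t' = G.it (- m) t"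
        have t': "y \<le> t'" "t' < g y" using G.back_in[OF y mP] unfolding t'_def by auto
        then obtain z' where z': "z' \<in> {x..f x}" "k z' = t'" using kim by (metis atLeastAtMost_iff image_iff less_imp_le)
        have z'f: "z' < f x" using z' t' kx by (cases "z' = f x") auto
        have z'in: "z' \<in> {a..b}" "f x \<in> {a..b}" using z' x fx by auto
        define z where "z = F.it m z'"
        have "F.it m x \<le> z" using strict_mono_on_leD[OF F.it_sm xin z'in(1)] z' unfolding z_def by auto
        moreover have "z < F.it (m + 1) x"
          using strict_mono_onD[OF F.it_sm z'in z'f] Fsucc unfolding z_def by simp
        moreover have zab: "a < z" "z < b" using F.it_open[of z' m] z' x fx unfolding z_def by auto
        ultimately have pz: "K z = G.it m (k (F.it (- m) z))" using piece by blast
        have "F.it (- m) z = z'" unfolding z_def using F.it_add[OF z'in(1), of "- m" m] by simp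
        then have "K z = G.it m (G.it (- m) t)" using pz z' unfolding t'_def by simp
        also have "\<dots> = t" using G.it_add[of t m "- m"] t by simp
        finally show ?thesis using zab by (metis atLeastAtMost_iff image_eqI less_imp_le)
      qed
    qed
  qed
  have agree: "\<forall>z\<in>{x..f x}. K z = k z"
  proof
    fix z assume z: "z \<in> {x..f x}"
    show "K z = k z"
    proof (cases "z = f x")
      case True
      have "F.it 1 x \<le> z" "z < F.it (1 + 1) x"
        using True F.it_1[OF xin] F.P_less_iff[OF x, of 1 2] by auto
      then have "K z = G.it 1 (k (F.it (- 1) z))" using piece[of z 1] True x fx by auto
      also have "\<dots> = g (k x)"
      proof -
        have "F.it (- 1) (f x) = x" using F.it_m1[OF F.f_in[OF xin]] F.fi_f[OF xin] by simp
        moreover have "G.it 1 (k x) = g (k x)" using G.it_1[of "k x"] kx yin by simp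
        ultimately show ?thesis using True by simp
      qed
      finally show ?thesis using True kx by simp
    next
      case False
      have "F.it 0 x \<le> z" "z < F.it (0 + 1) x" using z False F.it_1[OF xin] by auto
      then show ?thesis using piece[of z 0] z x fx by auto
    qed
  qed
  have equi: "\<forall>z\<in>{a..b}. K (f z) = g (K z)"
  proof
    fix z assume zin: "z \<in> {a..b}"
    show "K (f z) = g (K z)"
    proof (cases "z = a \<or> z = b")
      case True then show ?thesis using Ka Kb F.fa F.fb G.fa G.fb by auto
    next
      case False
      then have z: "a < z" "z < b" using zin by auto
      define n where "n = F.N x z"
      have nP: "F.it n x \<le> z" "z < F.it (n + 1) x" using F.N_prop[OF x z] unfolding n_def by auto
      have fz: "a < f z" "f z < b" using F.it_open[OF z, of 1] F.it_1 zin by auto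
      have h12: "F.it (n+1) x \<le> f z" "f z < F.it (n + 1 + 1) x"
        using strict_mono_on_leD[OF F.sm F.it_in[OF xin] zin nP(1)]
              strict_mono_onD[OF F.sm zin F.it_in[OF xin] nP(2)]
              F.it_succ[OF xin, of n] F.it_succ[OF xin, of "n+1"] by auto
      then have p1: "K (f z) = G.it (n+1) (k (F.it (- (n+1)) (f z)))"
        and q: "y \<le> k (F.it (- (n+1)) (f z))" "k (F.it (- (n+1)) (f z)) < g y"
        using piece[OF fz h12] by blast+
      have p0: "K z = G.it n (k (F.it (- n) z))" using piece[OF z nP] by auto
      have "F.it (- (n+1)) (f z) = F.it (- (n+1)) (F.it 1 z)" using F.it_1 zin by simp
      also have "\<dots> = F.it (- n) z" using F.it_add[OF zin, of "- (n+1)" 1] by simp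
      finally have e: "F.it (- (n+1)) (f z) = F.it (- n) z" .
      have win: "k (F.it (- n) z) \<in> {c..d}" using q e y gy by auto
      show ?thesis using p1 p0 e G.it_succ[OF win, of n] by simp
    qed
  qed
  show ?thesis using smK imK agree equi by blast
qed



definition smo :: "(real \<Rightarrow> real) \<Rightarrow> bool" where
  "smo h \<longleftrightarrow> strict_mono_on {0..1} h \<and> h ` {0..1} = {0..1}"

lemma sm_subset: "strict_mono_on A f \<Longrightarrow> B \<subseteq> A \<Longrightarrow> strict_mono_on B f"
  by (rule monotone_on_subset)

lemma hom01_facts:
  assumes "hom01 f"
  shows "continuous_on {0..1} f \<and> f ` {0..1} = {0..1} \<and> inj_on f {0..1}"
proof -
  obtain g where hg: "homeomorphism {0..1} {0..1} f g" using assms unfolding hom01_def by blast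
  have "inj_on f {0..1}" using homeomorphism_apply1[OF hg] by (metis inj_onI)
  then show ?thesis using homeomorphism_image1[OF hg] homeomorphism_cont1[OF hg] by simp
qed

lemma pos_hom_smo:
  assumes h: "hom01 f" and p: "positive_hom f"
  shows "smo f"
proof -
  have cont: "continuous_on {0..1} f" and im: "f ` {0..1} = {0..1}" and inj: "inj_on f {0..1}"
    using hom01_facts[OF h] by auto
  have "f 1 \<in> {0..1}" "f 0 \<in> {0..1}" using im by auto
  moreover have "1 \<le> f 1" using p unfolding positive_hom_def by auto
  ultimately have f1: "f 1 = 1" by simp
  have "f 0 \<noteq> f 1" using inj_onD[OF inj, of 0 1] by auto
  moreover have "f 0 \<le> 1" using \<open>f 0 \<in> {0..1}\<close> by simp
  ultimately have f01: "f 0 < f 1" using f1 by simp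
  have mid: "f 0 < f z \<and> f z < f 1" if "0 < z" "z < 1" for z
    using continuous_inj_imp_mono[OF that cont inj] f01 by auto
  have "strict_mono_on {0..1} f"
  proof (rule strict_mono_onI)
    fix u v :: real assume u: "u \<in> {0..1}" and v: "v \<in> {0..1}" and uv: "u < v"
    show "f u < f v"
    proof (cases "u = 0")
      case True then show ?thesis using mid[of v] f01 v uv by (cases "v = 1") auto
    next
      case u0: False
      show ?thesis
      proof (cases "v = 1")
        case True then show ?thesis using mid[of u] u uv u0 by auto
      next
        case False
        have "0 < u" "u < v" "v < 1" using u v uv u0 False by auto
        moreover have "continuous_on {0..v} f" using cont by (rule continuous_on_subset) (use v in auto)
        moreover have "inj_on f {0..v}" using inj by (rule inj_on_subset) (use v in auto)
        ultimately have "(f 0 < f u \<and> f u < f v) \<or> (f v < f u \<and> f u < f 0)"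
          using continuous_inj_imp_mono[of 0 u v f] by auto
        then show ?thesis using mid[of v] \<open>0 < u\<close> \<open>u < v\<close> \<open>v < 1\<close> by auto
      qed
    qed
  qed
  then show ?thesis using im unfolding smo_def by simp
qed

lemma orient_smo: "orient_pres_hom01 h \<Longrightarrow> smo h"
  unfolding orient_pres_hom01_def smo_def
proof -
  assume "hom01 h \<and> mono_on {0..1} h"
  then show "strict_mono_on {0..1} h \<and> h ` {0..1} = {0..1}"
    using hom01_facts[of h] mono_imp_strict_mono[of "{0..1}" h] by simp
qed

lemma simple_pos_facts:
  assumes s: "simple_hom f" and p: "positive_hom f"
  shows "\<exists>a b. 0 \<le> a \<and> a < b \<and> b \<le> 1 \<and> support01 f = {a..b} \<and> (\<forall>z\<in>{a<..<b}. z < f z)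
     \<and> (\<forall>z\<in>{0..1}. z \<notin> {a<..<b} \<longrightarrow> f z = z)"
proof -
  have h: "hom01 f" using s unfolding simple_hom_def by simp
  have sm: "smo f" using pos_hom_smo[OF h p] .
  have cont: "continuous_on {0..1} f" using hom01_facts[OF h] by simp
  have e: "f 0 = 0 \<and> f 1 = 1" using sm_endpoints[of 0 1 f 0 1] sm unfolding smo_def by simp
  define U where "U = {0..1} - Fix01 f"
  have U: "U = {z \<in> {0..1}. f z \<noteq> z}" unfolding U_def Fix01_def by auto
  obtain C where C: "components U = {C}" using s unfolding simple_hom_def U_def by blast
  have UC: "U = C" using Union_components[of U] C by simp
  have conn: "connected U" and ne: "U \<noteq> {}"
    using in_components_connected[of C U] in_components_nonempty[of C U] C UC by auto
  have Usub: "U \<subseteq> {0<..<1}"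
  proof
    fix z assume "z \<in> U"
    then have "z \<in> {0..1}" "f z \<noteq> z" using U by auto
    then show "z \<in> {0<..<1}" using e by (cases "z = 0"; cases "z = 1") auto
  qed
  have Ueq: "U = (\<lambda>z. f z - z) -` (- {0}) \<inter> {0<..<1}" using U Usub by auto
  have "continuous_on {0<..<1} (\<lambda>z. f z - z)"
    by (intro continuous_intros continuous_on_subset[OF cont]) auto
  then have op: "open U" unfolding Ueq using continuous_on_open_vimage[of "{0<..<1}" "\<lambda>z. f z - z"]
      open_Compl[OF closed_singleton[of "0::real"]] by auto
  have ival: "is_interval U" using conn is_interval_connected_1 by blast
  define a where "a = Inf U"
  define b where "b = Sup U"
  have bdd: "bdd_below U" "bdd_above U" using Usub by (auto intro!: bdd_belowI[of _ 0] bdd_aboveI[of _ 1])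
  have in1: "a < z \<and> z < b" if z: "z \<in> U" for z
  proof -
    obtain e where e: "e > 0" "ball z e \<subseteq> U" using op z open_contains_ball by blast
    have "z - e/2 \<in> U" "z + e/2 \<in> U" using e by (auto simp: dist_real_def intro!: subsetD[OF e(2)])
    then have "a \<le> z - e/2" "z + e/2 \<le> b" unfolding a_def b_def using bdd
      by (auto intro: cInf_lower cSup_upper)
    then show ?thesis using e by auto
  qed
  have in2: "z \<in> U" if z: "a < z" "z < b" for z
  proof -
    obtain u where u: "u \<in> U" "u < z" using z(1) cInf_less_iff[OF ne bdd(1)] unfolding a_def by auto
    obtain v where v: "v \<in> U" "z < v" using z(2) less_cSup_iff[OF ne bdd(2)] unfolding b_def by auto
    show ?thesis using ival u v unfolding is_interval_1 by (meson less_imp_le)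
  qed
  have Uab: "U = {a<..<b}" using in1 in2 by auto
  obtain z0 where "z0 \<in> U" using ne by auto
  then have ab: "a < b" using in1 by fastforce
  have a0: "0 \<le> a" unfolding a_def using ne Usub by (auto intro!: cInf_greatest)
  have b1: "b \<le> 1" unfolding b_def using ne Usub by (auto intro!: cSup_least)
  have supp: "support01 f = {a..b}" unfolding support01_def U_def[symmetric] Uab using ab by simp
  have pos: "\<forall>z\<in>{a<..<b}. z < f z" 
  proof
    fix z assume "z \<in> {a<..<b}"
    then have "z \<in> U" using Uab by simp
    then have "z \<in> {0..1}" "f z \<noteq> z" unfolding U by auto
    moreover have "z \<le> f z" using p \<open>z \<in> {0..1}\<close> unfolding positive_hom_def by blast
    ultimately show "z < f z" by simp
  qed
  have fixp: "\<forall>z\<in>{0..1}. z \<notin> {a<..<b} \<longrightarrow> f z = z"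
  proof (intro ballI impI)
    fix z :: real assume "z \<in> {0..1}" "z \<notin> {a<..<b}"
    then have "z \<notin> U" using Uab by simp
    then show "f z = z" using \<open>z \<in> {0..1}\<close> unfolding U by auto
  qed
  show ?thesis using a0 ab b1 supp pos fixp by blast
qed

lemma triple_facts:
  assumes fs: "fundamental_system S" and t: "t \<in> S"
  shows "\<exists>a b x. 0 \<le> a \<and> a < x \<and> x < b \<and> b \<le> 1 \<and> fst (snd t) = {a..b}
     \<and> snd (snd t) = {x..fst t x} \<and> fst t x < b \<and> shift (fst t) a b \<and> smo (fst t)
     \<and> (\<forall>z\<in>{0..1}. z \<notin> {a<..<b} \<longrightarrow> fst t z = z) \<and> fst t a = a \<and> fst t b = b"
proof -
  obtain f Sf I where t3: "t = (f, Sf, I)" by (cases t) auto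
  have "\<forall>(f, S, I) \<in> S. simple_hom f \<and> positive_hom f \<and> S = support01 f
                        \<and> I \<subseteq> S \<and> fundamental_domain f I"
    using fs unfolding fundamental_system_def by (rule conjunct1)
  from bspec[OF this t[unfolded t3]]
  have pr: "simple_hom f" "positive_hom f" "Sf = support01 f" "fundamental_domain f I"
    by simp_all
  have "hom01 f" using pr(1) unfolding simple_hom_def by simp
  then have sm: "smo f" using pos_hom_smo pr(2) by simp
  obtain a b where ab: "0 \<le> a" "a < b" "b \<le> 1" "support01 f = {a..b}" "\<forall>z\<in>{a<..<b}. z < f z"
     "\<forall>z\<in>{0..1}. z \<notin> {a<..<b} \<longrightarrow> f z = z"
    using simple_pos_facts[OF pr(1,2)] by (elim exE conjE) (rule that; assumption)
  obtain x where x: "x \<in> {a<..<b}" "I = {x..f x}" using pr(4) ab(4) unfolding fundamental_domain_def by auto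
  have fa: "f a = a" "f b = b" using ab(6)[rule_format, of a] ab(6)[rule_format, of b] ab(1-3) by auto
  have smab: "strict_mono_on {a..b} f"
    apply (rule sm_subset[of "{0..1}"])
    using sm ab unfolding smo_def by auto
  have imab: "f ` {a..b} = {a..b}" using sm_sub_image[of 0 1 f 0 1 a b] sm ab fa unfolding smo_def by auto
  have sh: "shift f a b" using ab smab imab by unfold_locales auto
  have "f x < f b" using strict_mono_onD[OF smab, of x b] x by auto
  then have fxb: "f x < b" using fa by simp
  show ?thesis unfolding t3 fst_conv snd_conv
    apply (rule exI[of _ a], rule exI[of _ b], rule exI[of _ x])
    using ab x sh sm fa pr(3) fxb by simp
qed



lemma triple_factsE:
  assumes fs: "fundamental_system S" and t: "t \<in> S"
  obtains a b x where "0 \<le> a" "a < x" "x < b" "b \<le> 1" "fst (snd t) = {a..b}"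
     "snd (snd t) = {x..fst t x}" "fst t x < b" "shift (fst t) a b" "smo (fst t)"
     "\<forall>z\<in>{0..1}. z \<notin> {a<..<b} \<longrightarrow> fst t z = z" "fst t a = a" "fst t b = b"
  using triple_facts[OF fs t] by (elim exE conjE) (rule that; assumption)

lemma fs_nest:
  assumes "fundamental_system S" "t1 \<in> S" "t2 \<in> S" "t1 \<noteq> t2"
  shows "interior (fst (snd t1)) \<inter> interior (fst (snd t2)) = {} \<or> fst (snd t1) \<subseteq> snd (snd t2)
     \<or> fst (snd t2) \<subseteq> snd (snd t1)"
proof -
  have "\<forall>t1\<in>S. \<forall>t2\<in>S. t1 \<noteq> t2 \<longrightarrow>
        (let S1 = fst (snd t1); I1 = snd (snd t1); S2 = fst (snd t2); I2 = snd (snd t2) in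
          interior S1 \<inter> interior S2 = {} \<or> S1 \<subseteq> I2 \<or> S2 \<subseteq> I1)"
    using assms(1) unfolding fundamental_system_def by (rule conjunct2)
  then have "(let S1 = fst (snd t1); I1 = snd (snd t1); S2 = fst (snd t2); I2 = snd (snd t2) in
          interior S1 \<inter> interior S2 = {} \<or> S1 \<subseteq> I2 \<or> S2 \<subseteq> I1)"
    using assms(2-4) by blast
  then show ?thesis by (simp only: Let_def)
qed

lemma gen_sub: "Ball S P \<Longrightarrow> (\<forall>x\<in>S. \<forall>y\<in>S. Q x y) \<Longrightarrow> T \<subseteq> S \<Longrightarrow> Ball T P \<and> (\<forall>x\<in>T. \<forall>y\<in>T. Q x y)"
  by blast

lemma fs_subset:
  assumes "fundamental_system S" "T \<subseteq> S"
  shows "fundamental_system T"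
  unfolding fundamental_system_def
  apply (rule gen_sub[of S])
  using assms(1) unfolding fundamental_system_def apply (rule conjunct1)
  using assms(1) unfolding fundamental_system_def apply (rule conjunct2)
  using assms(2) .

lemma smo_interval:
  assumes "smo h" "0 \<le> u" "u \<le> v" "v \<le> 1"
  shows "h ` {u..v} = {h u..h v}"
  using sm_sub_image[of 0 1 h 0 1 u v] assms unfolding smo_def by auto

lemma smo_less: "smo h \<Longrightarrow> u \<in> {0..1} \<Longrightarrow> v \<in> {0..1} \<Longrightarrow> u < v \<Longrightarrow> h u < h v"
  unfolding smo_def using strict_mono_onD[of "{0..1}" h u v] by blast

lemma smo_in: "smo h \<Longrightarrow> u \<in> {0..1} \<Longrightarrow> h u \<in> {0..1}"
  unfolding smo_def by auto

lemma interval_eq_ends: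
  fixes p q r s :: real
  assumes "{p..q} = {r..s}" "p \<le> q" "r \<le> s"
  shows "p = r \<and> q = s"
  using assms by auto



lemma main_ind:
  "finite S \<Longrightarrow> fundamental_system S \<Longrightarrow> fundamental_system \<Sigma> \<Longrightarrow> smo h \<Longrightarrow> bij_betw \<phi> S \<Sigma> \<Longrightarrow>
   (\<forall>t\<in>S. fst (snd (\<phi> t)) = h ` fst (snd t) \<and> snd (snd (\<phi> t)) = h ` snd (snd t)) \<Longrightarrow>
   \<exists>ht. smo ht \<and> (\<forall>z\<in>{0..1}. (\<forall>t\<in>S. z \<notin> interior (fst (snd t))) \<longrightarrow> ht z = h z) \<and>
     (\<forall>t\<in>S. ht ` fst (snd t) = h ` fst (snd t) \<and> ht ` snd (snd t) = h ` snd (snd t)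
        \<and> (\<forall>z\<in>{0..1}. ht (fst t z) = fst (\<phi> t) (ht z)))"
proof (induction "card S" arbitrary: S \<Sigma> rule: less_induct)
  case less
  note fin = less.prems(1) and fsS = less.prems(2) and fsT = less.prems(3) and smh = less.prems(4)
    and bij = less.prems(5) and hyp = less.prems(6)
  show ?case
  proof (cases "S = {}")
    case True
    then show ?thesis using smh by (intro exI[of _ h]) simp
  next
    case False
    define len where "len t = Sup (fst (snd t)) - Inf (fst (snd t))" for t :: triple
    define M where "M = Max (len ` S)"
    have "M \<in> len ` S" unfolding M_def using fin False by (intro Max_in) auto
    then obtain t0 where t0S: "t0 \<in> S" and lenM: "len t0 = M" by auto
    have lenmax: "len t \<le> len t0" if "t \<in> S" for t
      unfolding lenM M_def using fin that by (intro Max_ge) auto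
    obtain a b x where ab: "0 \<le> a" "a < x" "x < b" "b \<le> 1" "fst (snd t0) = {a..b}"
      "snd (snd t0) = {x..fst t0 x}" "fst t0 x < b" "shift (fst t0) a b" "smo (fst t0)"
      "\<forall>z\<in>{0..1}. z \<notin> {a<..<b} \<longrightarrow> fst t0 z = z" "fst t0 a = a" "fst t0 b = b"
      by (rule triple_factsE[OF fsS t0S])
    define f where "f = fst t0"
    have pt0: "\<phi> t0 \<in> \<Sigma>" using bij t0S by (rule bij_betwE[THEN bspec])
    obtain c d y where cd: "0 \<le> c" "c < y" "y < d" "d \<le> 1" "fst (snd (\<phi> t0)) = {c..d}"
      "snd (snd (\<phi> t0)) = {y..fst (\<phi> t0) y}" "fst (\<phi> t0) y < d" "shift (fst (\<phi> t0)) c d"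
      "smo (fst (\<phi> t0))"
      "\<forall>z\<in>{0..1}. z \<notin> {c<..<d} \<longrightarrow> fst (\<phi> t0) z = z" "fst (\<phi> t0) c = c" "fst (\<phi> t0) d = d"
      by (rule triple_factsE[OF fsT pt0])
    define g where "g = fst (\<phi> t0)"
    have fx: "x < f x" using shift.pos[OF ab(8) ab(2) ab(3)] unfolding f_def .
    have fxb: "f x < b" using ab(7) unfolding f_def .
    have hab: "h ` {a..b} = {h a..h b}" using smo_interval[OF smh ab(1) _ ab(4)] ab(2,3) by simp
    have hxfx: "h ` {x..f x} = {h x..h (f x)}" using smo_interval[OF smh _ _ _] ab(1,2,4) fx fxb by simp
    have hy0: "fst (snd (\<phi> t0)) = h ` fst (snd t0)" "snd (snd (\<phi> t0)) = h ` snd (snd t0)"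
      using hyp t0S by blast+
    have e1: "{c..d} = {h a..h b}" using hy0(1) cd(5) ab(5) hab by simp
    have e2: "h a \<le> h b" using smo_less[OF smh, of a b] ab by auto
    have e3: "c \<le> d" using cd(2,3) by simp
    have chd0: "c = h a \<and> d = h b" using interval_eq_ends[OF e1 e3 e2] .
    have chd: "c = h a" "d = h b" using chd0 by simp_all
    have e4: "{y..g y} = {h x..h (f x)}" using hy0(2) cd(6) ab(6) hxfx unfolding g_def f_def by simp
    have e5: "h x \<le> h (f x)" using smo_less[OF smh, of x "f x"] ab fx fxb by auto
    have gy: "y < g y" using shift.pos[OF cd(8) cd(2) cd(3)] unfolding g_def .
    have yhx0: "y = h x \<and> g y = h (f x)" using interval_eq_ends[OF e4 _ e5] gy by (meson less_imp_le)
    have yhx: "y = h x" "g y = h (f x)" using yhx0 by blast+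
    define S' where "S' = S - {t0}"
    define T' where "T' = \<Sigma> - {\<phi> t0}"
    have cardS': "card S' < card S" unfolding S'_def by (rule card_Diff1_less[OF fin t0S])
    have finS': "finite S'" unfolding S'_def using fin by simp
    have fsS': "fundamental_system S'" unfolding S'_def using fsS by (rule fs_subset) auto
    have fsT': "fundamental_system T'" unfolding T'_def using fsT by (rule fs_subset) auto
    have bij1: "bij_betw \<phi> {t0} {\<phi> t0}" by (simp add: bij_betw_def)
    have bij': "bij_betw \<phi> S' T'" unfolding S'_def T'_def
      using bij_betw_DiffI[OF bij bij1] t0S pt0 by auto
    have hyp': "\<forall>t\<in>S'. fst (snd (\<phi> t)) = h ` fst (snd t) \<and> snd (snd (\<phi> t)) = h ` snd (snd t)"
      using hyp unfolding S'_def by auto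
    obtain ht' where ht'smo: "smo ht'"
      and ht'out: "\<forall>z\<in>{0..1}. (\<forall>t\<in>S'. z \<notin> interior (fst (snd t))) \<longrightarrow> ht' z = h z"
      and ht'tr: "\<forall>t\<in>S'. ht' ` fst (snd t) = h ` fst (snd t) \<and> ht' ` snd (snd t) = h ` snd (snd t)
        \<and> (\<forall>z\<in>{0..1}. ht' (fst t z) = fst (\<phi> t) (ht' z))"
      using less.hyps[OF cardS' finS' fsS' fsT' smh bij' hyp'] by (elim exE conjE) (rule that; assumption)
    have rel: "b' \<le> a \<or> b \<le> a' \<or> (x \<le> a' \<and> b' \<le> f x)"
      if t: "t \<in> S'" and tab: "fst (snd t) = {a'..b'}" "snd (snd t) = {x'..fst t x'}"
         "a' < x'" "x' < b'" "fst t x' < b'" for t a' b' x'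
    proof -
      have tS: "t \<in> S" and tne: "t0 \<noteq> t" using t unfolding S'_def by auto
      have "len t = b' - a'" unfolding len_def using tab by simp
      moreover have "len t0 = b - a" unfolding len_def using ab by simp
      ultimately have lens: "b' - a' \<le> b - a" using lenmax[OF tS] by simp
      consider "interior (fst (snd t0)) \<inter> interior (fst (snd t)) = {}"
        | "fst (snd t0) \<subseteq> snd (snd t)" | "fst (snd t) \<subseteq> snd (snd t0)"
        using fs_nest[OF fsS t0S tS tne] by blast
      then show ?thesis
      proof cases
        case 1
        then have dis: "{a<..<b} \<inter> {a'<..<b'} = {}" using ab(5) tab(1) by simp
        show ?thesis
        proof (rule ccontr)
          assume "\<not> ?thesis"
          then have "a < b'" "a' < b" by auto
          define m where "m = (max a a' + min b b') / 2"
          have "m \<in> {a<..<b} \<inter> {a'<..<b'}" unfolding m_def using \<open>a < b'\<close> \<open>a' < b\<close> ab tab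
            by (auto simp: max_def min_def)
          then show False using dis by auto
        qed
      next
        case 2
        then have "{a..b} \<subseteq> {x'..fst t x'}" using ab(5) tab(2) by simp
        then have "x' \<le> a" "b \<le> fst t x'" using ab by auto
        then show ?thesis using lens tab by linarith
      next
        case 3
        then have "{a'..b'} \<subseteq> {x..f x}" using ab(6) tab(1) unfolding f_def by simp
        then show ?thesis using tab by auto
      qed
    qed
    have notin: "z \<notin> interior (fst (snd t))" if tS': "t \<in> S'" and zz: "z \<in> {a, b, x, f x}" for t z
    proof -
      obtain a' b' x' where t': "0 \<le> a'" "a' < x'" "x' < b'" "b' \<le> 1" "fst (snd t) = {a'..b'}"
        "snd (snd t) = {x'..fst t x'}" "fst t x' < b'" "shift (fst t) a' b'" "smo (fst t)"
        "\<forall>z\<in>{0..1}. z \<notin> {a'<..<b'} \<longrightarrow> fst t z = z" "fst t a' = a'" "fst t b' = b'"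
        by (rule triple_factsE[OF fsS' tS'])
      have r: "b' \<le> a \<or> b \<le> a' \<or> (x \<le> a' \<and> b' \<le> f x)" using rel[OF tS' t'(5,6,2,3,7)] .
      have "interior (fst (snd t)) = {a'<..<b'}" using t'(5) by simp
      moreover have "z \<notin> {a'<..<b'}" using r zz ab(1-4) fx fxb by auto
      ultimately show ?thesis by simp
    qed
    have ht'pts: "ht' a = h a" "ht' b = h b" "ht' x = h x" "ht' (f x) = h (f x)"
    proof -
      have pts: "a \<in> {a..b}" "b \<in> {a..b}" "x \<in> {a..b}" "f x \<in> {a..b}" using ab fx unfolding f_def by auto
      have "\<forall>t\<in>S'. z \<notin> interior (fst (snd t))" if "z \<in> {a, b, x, f x}" for z
        using notin that by blast
      moreover have "z \<in> {0..1}" if "z \<in> {a, b, x, f x}" for z using that pts ab by auto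
      ultimately have "ht' z = h z" if "z \<in> {a, b, x, f x}" for z using ht'out that by blast
      then show "ht' a = h a" "ht' b = h b" "ht' x = h x" "ht' (f x) = h (f x)" by auto
    qed
    have ht'sm: "strict_mono_on {x..f x} ht'"
      apply (rule sm_subset[of "{0..1}"])
      using ht'smo ab(1,2,4) fx fxb unfolding smo_def by auto
    have ht'im: "ht' ` {x..f x} = {y..g y}"
      using smo_interval[OF ht'smo, of x "f x"] ab(1,2,4) fx fxb ht'pts yhx by simp
    obtain K where smK: "strict_mono_on {a..b} K" and imK: "K ` {a..b} = {c..d}"
      and agK: "\<forall>z\<in>{x..f x}. K z = ht' z" and eqK: "\<forall>z\<in>{a..b}. K (f z) = g (K z)"
      using conj_ext[OF ab(8)[folded f_def] cd(8)[folded g_def] ab(2,3) cd(2,3) ht'sm ht'im]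
      by (elim exE conjE) (rule that; assumption)
    have Kab: "K a = c" "K b = d" using sm_endpoints[OF smK imK] ab(2,3) by auto
    have ht'ab: "ht' a = c" "ht' b = d" using ht'pts chd by auto
    have Kin: "K z \<in> {c..d}" if "z \<in> {a..b}" for z using imK that by blast
    have ht'lo: "ht' z < c" if "z \<in> {0..1}" "z < a" for z
      using smo_less[OF ht'smo, of z a] that ab ht'ab by auto
    have ht'hi: "d < ht' z" if "z \<in> {0..1}" "b < z" for z
      using smo_less[OF ht'smo, of b z] that ab ht'ab by auto
    define ht where "ht z = (if z \<in> {a..b} then K z else ht' z)" for z
    have htsm: "strict_mono_on {0..1} ht"
    proof (rule strict_mono_onI)
      fix z w :: real assume z: "z \<in> {0..1}" and w: "w \<in> {0..1}" and zw: "z < w"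
      consider "z < a" | "z \<in> {a..b}" | "b < z" by fastforce
      then show "ht z < ht w"
      proof cases
        case 1
        then have hz: "ht z < c" using ht'lo[OF z] unfolding ht_def by simp
        consider "w < a" | "w \<in> {a..b}" | "b < w" by fastforce
        then show ?thesis
        proof cases
          case 1 then show ?thesis using smo_less[OF ht'smo z w zw] \<open>z < a\<close> unfolding ht_def by simp
        next
          case 2 then show ?thesis using hz Kin[OF 2] unfolding ht_def by auto
        next
          case 3 then show ?thesis using hz ht'hi[OF w] cd(2,3) unfolding ht_def by auto
        qed
      next
        case 2
        then have hz: "ht z = K z" unfolding ht_def by simp
        consider "w \<in> {a..b}" | "b < w" using zw 2 by fastforce
        then show ?thesis
        proof cases
          case 1 then show ?thesis using strict_mono_onD[OF smK 2 1 zw] hz unfolding ht_def by simp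
        next
          case 3: 2 then show ?thesis using hz Kin[OF \<open>z \<in> {a..b}\<close>] ht'hi[OF w] unfolding ht_def by auto
        qed
      next
        case 3
        then have "b < w" using zw by simp
        then show ?thesis using smo_less[OF ht'smo z w zw] \<open>b < z\<close> unfolding ht_def by simp
      qed
    qed
    have htim: "ht ` {0..1} = {0..1}"
    proof
      show "ht ` {0..1} \<subseteq> {0..1}"
      proof
        fix t assume "t \<in> ht ` {0..1}"
        then obtain z where z: "z \<in> {0..1}" "t = ht z" by blast
        show "t \<in> {0..1}"
        proof (cases "z \<in> {a..b}")
          case True then show ?thesis using Kin[OF True] z cd(1,4) unfolding ht_def by auto
        next
          case False then show ?thesis using smo_in[OF ht'smo z(1)] z unfolding ht_def by auto
        qed
      qed
    next
      show "{0..1} \<subseteq> ht ` {0..1}"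
      proof
        fix t :: real assume t: "t \<in> {0..1}"
        then obtain z where z: "z \<in> {0..1}" "t = ht' z" using ht'smo unfolding smo_def by blast
        show "t \<in> ht ` {0..1}"
        proof (cases "z \<in> {a..b}")
          case True
          have "ht' ` {a..b} = {c..d}" using smo_interval[OF ht'smo, of a b] ab ht'ab by simp
          then have "t \<in> K ` {a..b}" using imK z True by blast
          then obtain w where w: "w \<in> {a..b}" "t = K w" by blast
          then have "t = ht w" "w \<in> {0..1}" using ab(1,4) unfolding ht_def by auto
          then show ?thesis by blast
        next
          case False
          then have "t = ht z" using z unfolding ht_def by auto
          then show ?thesis using z by blast
        qed
      qed
    qed
    have htsmo: "smo ht" unfolding smo_def using htsm htim by simp
    have htinj: "ht u = ht v \<Longrightarrow> u \<in> {0..1} \<Longrightarrow> v \<in> {0..1} \<Longrightarrow> u = v" for u v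
      using strict_mono_on_eqD[OF htsm] by metis
    have agree: "ht z = ht' z" if tS': "t \<in> S'" and zt: "z \<in> fst (snd t)" for t z
    proof -
      obtain a' b' x' where t': "0 \<le> a'" "a' < x'" "x' < b'" "b' \<le> 1" "fst (snd t) = {a'..b'}"
        "snd (snd t) = {x'..fst t x'}" "fst t x' < b'" "shift (fst t) a' b'" "smo (fst t)"
        "\<forall>z\<in>{0..1}. z \<notin> {a'<..<b'} \<longrightarrow> fst t z = z" "fst t a' = a'" "fst t b' = b'"
        by (rule triple_factsE[OF fsS' tS'])
      have r: "b' \<le> a \<or> b \<le> a' \<or> (x \<le> a' \<and> b' \<le> f x)" using rel[OF tS' t'(5,6,2,3,7)] .
      have zr: "a' \<le> z" "z \<le> b'" using zt t'(5) by auto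
      show ?thesis
      proof (cases "z \<in> {a..b}")
        case False then show ?thesis unfolding ht_def by auto
      next
        case True
        then have "z = a \<or> z = b \<or> z \<in> {x..f x}" using r zr by auto
        then show ?thesis using True Kab ht'ab agK unfolding ht_def by auto
      qed
    qed
    have P2: "\<forall>z\<in>{0..1}. (\<forall>t\<in>S. z \<notin> interior (fst (snd t))) \<longrightarrow> ht z = h z"
    proof (intro ballI impI)
      fix z :: real assume z: "z \<in> {0..1}" and nz: "\<forall>t\<in>S. z \<notin> interior (fst (snd t))"
      have "z \<notin> {a<..<b}" using nz t0S ab(5) by auto
      moreover have "\<forall>t\<in>S'. z \<notin> interior (fst (snd t))" using nz unfolding S'_def by blast
      then have "ht' z = h z" using ht'out z by blast
      ultimately show "ht z = h z" using Kab chd unfolding ht_def by (cases "z = a"; cases "z = b") auto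
    qed
    have P3: "ht ` fst (snd t) = h ` fst (snd t) \<and> ht ` snd (snd t) = h ` snd (snd t)
        \<and> (\<forall>z\<in>{0..1}. ht (fst t z) = fst (\<phi> t) (ht z))" if tS: "t \<in> S" for t
    proof (cases "t = t0")
      case True
      have i1: "ht ` {a..b} = {c..d}" using imK unfolding ht_def by simp
      have i2: "ht ` {x..f x} = {y..g y}"
      proof -
        have "ht ` {x..f x} = ht' ` {x..f x}"
          using agK ab fx fxb unfolding ht_def by (intro image_cong) auto
        then show ?thesis using ht'im by simp
      qed
      have conj: "ht (f z) = g (ht z)" if z: "z \<in> {0..1}" for z
      proof (cases "z \<in> {a..b}")
        case True
        have "f z \<in> {a..b}" using shift.f_in[OF ab(8) True] unfolding f_def .
        then show ?thesis using eqK True unfolding ht_def by simp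
      next
        case False
        then have fz: "f z = z" using ab(10) z unfolding f_def by auto
        have "ht z = ht' z" using False unfolding ht_def by auto
        moreover have "ht' z < c \<or> d < ht' z" using False ht'lo[OF z] ht'hi[OF z] by fastforce
        moreover have "ht' z \<in> {0..1}" using smo_in[OF ht'smo z] .
        ultimately have "g (ht z) = ht z" using cd(10) unfolding g_def by auto
        then show ?thesis using fz by simp
      qed
      show ?thesis using True i1 i2 conj ab(5,6) hab hxfx chd yhx unfolding f_def g_def by simp
    next
      case False
      then have tS': "t \<in> S'" unfolding S'_def using tS by simp
      obtain a' b' x' where t': "0 \<le> a'" "a' < x'" "x' < b'" "b' \<le> 1" "fst (snd t) = {a'..b'}"
        "snd (snd t) = {x'..fst t x'}" "fst t x' < b'" "shift (fst t) a' b'" "smo (fst t)"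
        "\<forall>z\<in>{0..1}. z \<notin> {a'<..<b'} \<longrightarrow> fst t z = z" "fst t a' = a'" "fst t b' = b'"
        by (rule triple_factsE[OF fsS' tS'])
      have pt: "\<phi> t \<in> \<Sigma>" using bij tS by (rule bij_betwE[THEN bspec])
      obtain c' d' y' where cd': "0 \<le> c'" "c' < y'" "y' < d'" "d' \<le> 1" "fst (snd (\<phi> t)) = {c'..d'}"
        "snd (snd (\<phi> t)) = {y'..fst (\<phi> t) y'}" "fst (\<phi> t) y' < d'" "shift (fst (\<phi> t)) c' d'"
        "smo (fst (\<phi> t))"
        "\<forall>z\<in>{0..1}. z \<notin> {c'<..<d'} \<longrightarrow> fst (\<phi> t) z = z" "fst (\<phi> t) c' = c'" "fst (\<phi> t) d' = d'"
        by (rule triple_factsE[OF fsT pt])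
      have IH: "ht' ` fst (snd t) = h ` fst (snd t)" "ht' ` snd (snd t) = h ` snd (snd t)"
        "\<forall>z\<in>{0..1}. ht' (fst t z) = fst (\<phi> t) (ht' z)" using ht'tr tS' by blast+
      have i1: "ht ` fst (snd t) = h ` fst (snd t)"
        using IH(1) agree[OF tS'] by (metis image_cong)
      have sub: "snd (snd t) \<subseteq> fst (snd t)" using t'(5,6) t'(2,3,7) by auto
      have i2: "ht ` snd (snd t) = h ` snd (snd t)"
      proof -
        have "ht ` snd (snd t) = ht' ` snd (snd t)"
          using agree[OF tS'] sub by (intro image_cong) auto
        then show ?thesis using IH(2) by simp
      qed
      have hyt: "fst (snd (\<phi> t)) = h ` fst (snd t)" using hyp tS by blast
      have conj: "ht (fst t z) = fst (\<phi> t) (ht z)" if z: "z \<in> {0..1}" for z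
      proof (cases "z \<in> {a'..b'}")
        case True
        have fz: "fst t z \<in> {a'..b'}" using shift.f_in[OF t'(8) True] .
        have "ht (fst t z) = ht' (fst t z)" using agree[OF tS'] fz t'(5) by simp
        also have "\<dots> = fst (\<phi> t) (ht' z)" using IH(3) z by blast
        also have "\<dots> = fst (\<phi> t) (ht z)" using agree[OF tS'] True t'(5) by simp
        finally show ?thesis .
      next
        case False
        then have fz: "fst t z = z" using t'(10) z by auto
        have "ht z \<notin> {c'..d'}"
        proof
          assume "ht z \<in> {c'..d'}"
          moreover have "{c'..d'} = ht ` {a'..b'}" using i1 hyt cd'(5) t'(5) by simp
          ultimately have "ht z \<in> ht ` {a'..b'}" by simp
          then obtain w where w: "w \<in> {a'..b'}" "ht z = ht w" by blast
          then have "z = w" using htinj[of z w] z t'(1,4) by auto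
          then show False using w False by simp
        qed
        moreover have "ht z \<in> {0..1}" using smo_in[OF htsmo z] .
        ultimately have "fst (\<phi> t) (ht z) = ht z" using cd'(10) by auto
        then show ?thesis using fz by simp
      qed
      show ?thesis using i1 i2 conj by blast
    qed
    show ?thesis using htsmo P2 P3 by blast
  qed
qed



lemma gg_maps:
  assumes "g \<in> gen_group F" and "\<forall>f\<in>F. smo f"
  shows "\<forall>z\<in>{0..1}. g z \<in> {0..1}"
  using assms
proof (induction rule: gen_group.induct)
  case gen_id then show ?case by simp
next
  case (gen_mul f g) then show ?case using smo_in by auto
next
  case (gen_inv f g)
  then have "f ` {0..1} = {0..1}" unfolding smo_def by auto
  show ?case
  proof
    fix z :: real assume z: "z \<in> {0..1}"
    then have "g z \<in> f ` {0..1}" using gen_inv \<open>f ` {0..1} = {0..1}\<close> by auto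
    then show "restrict (inv_into {0..1} f \<circ> g) {0..1} z \<in> {0..1}"
      using inv_into_into[of "g z" f "{0..1}"] z by simp
  qed
qed

lemma conj_comp:
  assumes htsmo: "smo ht" and fsmo: "smo f" and psmo: "smo p"
    and cj: "\<forall>z\<in>{0..1}. ht (f z) = p (ht z)"
    and gm: "\<forall>z\<in>{0..1}. g z \<in> {0..1}"
  shows "restrict (ht \<circ> restrict (f \<circ> g) {0..1} \<circ> inv_into {0..1} ht) {0..1}
       = restrict (p \<circ> restrict (ht \<circ> g \<circ> inv_into {0..1} ht) {0..1}) {0..1}"
    and "restrict (ht \<circ> restrict (inv_into {0..1} f \<circ> g) {0..1} \<circ> inv_into {0..1} ht) {0..1}
       = restrict (inv_into {0..1} p \<circ> restrict (ht \<circ> g \<circ> inv_into {0..1} ht) {0..1}) {0..1}"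
proof -
  have him: "ht ` {0..1} = {0..1}" using htsmo unfolding smo_def by simp
  have hi: "inv_into {0..1} ht x \<in> {0..1}" if "x \<in> {0..1}" for x
    using inv_into_into[of x ht "{0..1}"] that him by simp
  show "restrict (ht \<circ> restrict (f \<circ> g) {0..1} \<circ> inv_into {0..1} ht) {0..1}
       = restrict (p \<circ> restrict (ht \<circ> g \<circ> inv_into {0..1} ht) {0..1}) {0..1}"
  proof (rule ext)
    fix x show "restrict (ht \<circ> restrict (f \<circ> g) {0..1} \<circ> inv_into {0..1} ht) {0..1} x
       = restrict (p \<circ> restrict (ht \<circ> g \<circ> inv_into {0..1} ht) {0..1}) {0..1} x"
    proof (cases "x \<in> {0..1}")
      case True
      then show ?thesis using hi[OF True] gm cj by simp
    next
      case False then show ?thesis by auto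
    qed
  qed
  have finv: "ht (inv_into {0..1} f z) = inv_into {0..1} p (ht z)" if z: "z \<in> {0..1}" for z
  proof -
    have fim: "f ` {0..1} = {0..1}" and pim: "p ` {0..1} = {0..1}" using fsmo psmo unfolding smo_def by auto
    have pinj: "inj_on p {0..1}" using psmo unfolding smo_def by (simp add: strict_mono_on_imp_inj_on)
    have zf: "z \<in> f ` {0..1}" using z fim by simp
    have w: "inv_into {0..1} f z \<in> {0..1}" "f (inv_into {0..1} f z) = z"
      using inv_into_into[OF zf] f_inv_into_f[OF zf] by auto
    have "p (ht (inv_into {0..1} f z)) = ht z" using cj w by metis
    moreover have "ht (inv_into {0..1} f z) \<in> {0..1}" using smo_in[OF htsmo w(1)] .
    ultimately show ?thesis using inv_into_f_f[OF pinj] by metis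
  qed
  show "restrict (ht \<circ> restrict (inv_into {0..1} f \<circ> g) {0..1} \<circ> inv_into {0..1} ht) {0..1}
       = restrict (inv_into {0..1} p \<circ> restrict (ht \<circ> g \<circ> inv_into {0..1} ht) {0..1}) {0..1}"
  proof (rule ext)
    fix x show "restrict (ht \<circ> restrict (inv_into {0..1} f \<circ> g) {0..1} \<circ> inv_into {0..1} ht) {0..1} x
       = restrict (inv_into {0..1} p \<circ> restrict (ht \<circ> g \<circ> inv_into {0..1} ht) {0..1}) {0..1} x"
    proof (cases "x \<in> {0..1}")
      case True
      then show ?thesis using hi[OF True] gm finv by simp
    next
      case False then show ?thesis by auto
    qed
  qed
qed

lemma conj_id:
  assumes "smo ht"
  shows "restrict (ht \<circ> restrict id {0..1} \<circ> inv_into {0..1} ht) {0..1} = restrict id {0..1}"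
proof (rule ext)
  fix x
  have him: "ht ` {0..1} = {0..1}" using assms unfolding smo_def by simp
  show "restrict (ht \<circ> restrict id {0..1} \<circ> inv_into {0..1} ht) {0..1} x = restrict id {0..1} x"
    using inv_into_into[of x ht "{0..1}"] f_inv_into_f[of x ht "{0..1}"] him by auto
qed



theorem mainTheorem20:
  fixes \<S> \<Sigma> :: "triple set" and h :: "real \<Rightarrow> real" and \<phi> :: "triple \<Rightarrow> triple"
  assumes "finite \<S>" and "finite \<Sigma>"
    and "fundamental_system \<S>" and "fundamental_system \<Sigma>"
    and "orient_pres_hom01 h"
    and "bij_betw \<phi> \<S> \<Sigma>"
    and "\<And>f S I. (f, S, I) \<in> \<S> \<Longrightarrow>
            fst (snd (\<phi> (f, S, I))) = h ` S \<and> snd (snd (\<phi> (f, S, I))) = h ` I"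
  shows "\<exists>ht. hom01 ht \<and>
           (\<forall>(f, S, I) \<in> \<S>. \<forall>x \<in> {0..1}.
               ht (f (inv_into {0..1} ht x)) = fst (\<phi> (f, S, I)) x) \<and>
           gen_group (fst ` \<Sigma>) =
             (\<lambda>g. restrict (ht \<circ> g \<circ> inv_into {0..1} ht) {0..1}) ` gen_group (fst ` \<S>)"
proof -
  have smh: "smo h" using orient_smo[OF assms(5)] .
  have hyp: "\<forall>t\<in>\<S>. fst (snd (\<phi> t)) = h ` fst (snd t) \<and> snd (snd (\<phi> t)) = h ` snd (snd t)"
  proof
    fix t assume t: "t \<in> \<S>"
    obtain f S I where t3: "t = (f, S, I)" by (cases t) auto
    show "fst (snd (\<phi> t)) = h ` fst (snd t) \<and> snd (snd (\<phi> t)) = h ` snd (snd t)"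
      using assms(7)[of f S I] t unfolding t3 by simp
  qed
  obtain ht where htsmo: "smo ht"
    and htt: "\<forall>t\<in>\<S>. ht ` fst (snd t) = h ` fst (snd t) \<and> ht ` snd (snd t) = h ` snd (snd t)
        \<and> (\<forall>z\<in>{0..1}. ht (fst t z) = fst (\<phi> t) (ht z))"
    using main_ind[OF assms(1,3,4) smh assms(6) hyp] by (elim exE conjE) (rule that; assumption)
  have cj: "\<forall>z\<in>{0..1}. ht (fst t z) = fst (\<phi> t) (ht z)" if "t \<in> \<S>" for t
    using htt that by blast
  have him: "ht ` {0..1} = {0..1}" using htsmo unfolding smo_def by simp
  have hom: "hom01 ht"
  proof -
    have "continuous_on {0..1} ht" using sm_cont[of 0 1 ht 0 1] htsmo unfolding smo_def by simp
    moreover have "inj_on ht {0..1}" using htsmo unfolding smo_def by (simp add: strict_mono_on_imp_inj_on)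
    ultimately show ?thesis unfolding hom01_def using homeomorphism_compact[of "{0..1}" ht "{0..1}"] him by simp
  qed
  have hi: "inv_into {0..1} ht x \<in> {0..1}" "ht (inv_into {0..1} ht x) = x" if "x \<in> {0..1}" for x
    using inv_into_into[of x ht "{0..1}"] f_inv_into_f[of x ht "{0..1}"] that him by auto
  have Q: "\<forall>t\<in>\<S>. \<forall>x\<in>{0..1}. ht (fst t (inv_into {0..1} ht x)) = fst (\<phi> t) x"
  proof (intro ballI)
    fix t and x :: real assume t: "t \<in> \<S>" and x: "x \<in> {0..1}"
    show "ht (fst t (inv_into {0..1} ht x)) = fst (\<phi> t) x"
      using cj[OF t] hi[OF x] by metis
  qed
  have P1: "\<forall>(f, S, I) \<in> \<S>. \<forall>x \<in> {0..1}. ht (f (inv_into {0..1} ht x)) = fst (\<phi> (f, S, I)) x"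
    using Q by (simp add: split_beta)
  define C where "C g = restrict (ht \<circ> g \<circ> inv_into {0..1} ht) {0..1}" for g :: "real \<Rightarrow> real"
  have smoS: "smo (fst t)" if "t \<in> \<S>" for t
    by (rule triple_factsE[OF assms(3) that]) simp
  have smoT: "smo (fst s)" if "s \<in> \<Sigma>" for s
    by (rule triple_factsE[OF assms(4) that]) simp
  have phiT: "\<phi> t \<in> \<Sigma>" if "t \<in> \<S>" for t using assms(6) that by (rule bij_betwE[THEN bspec])
  have FS: "\<forall>f\<in>fst ` \<S>. smo f" using smoS by blast
  have FT: "\<forall>f\<in>fst ` \<Sigma>. smo f" using smoT by blast
  have cid: "C (restrict id {0..1}) = restrict id {0..1}" unfolding C_def using conj_id[OF htsmo] .
  have cmul: "C (restrict (fst t \<circ> g) {0..1}) = restrict (fst (\<phi> t) \<circ> C g) {0..1}"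
    and cinv: "C (restrict (inv_into {0..1} (fst t) \<circ> g) {0..1}) = restrict (inv_into {0..1} (fst (\<phi> t)) \<circ> C g) {0..1}"
    if t: "t \<in> \<S>" and g: "g \<in> gen_group (fst ` \<S>)" for t g
  proof -
    have gm: "\<forall>z\<in>{0..1}. g z \<in> {0..1}" using gg_maps[OF g FS] .
    show "C (restrict (fst t \<circ> g) {0..1}) = restrict (fst (\<phi> t) \<circ> C g) {0..1}"
      unfolding C_def using conj_comp(1)[OF htsmo smoS[OF t] smoT[OF phiT[OF t]] cj[OF t] gm] .
    show "C (restrict (inv_into {0..1} (fst t) \<circ> g) {0..1}) = restrict (inv_into {0..1} (fst (\<phi> t)) \<circ> C g) {0..1}"
      unfolding C_def using conj_comp(2)[OF htsmo smoS[OF t] smoT[OF phiT[OF t]] cj[OF t] gm] .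
  qed
  have sup: "C g \<in> gen_group (fst ` \<Sigma>)" if "g \<in> gen_group (fst ` \<S>)" for g
    using that
  proof (induction rule: gen_group.induct)
    case gen_id then show ?case unfolding cid by (rule gen_group.gen_id)
  next
    case (gen_mul f g)
    then obtain t where t: "t \<in> \<S>" "f = fst t" by blast
    have "fst (\<phi> t) \<in> fst ` \<Sigma>" using phiT[OF t(1)] by blast
    then have "restrict (fst (\<phi> t) \<circ> C g) {0..1} \<in> gen_group (fst ` \<Sigma>)"
      by (rule gen_group.gen_mul[OF _ gen_mul.IH])
    then show ?case unfolding t(2) cmul[OF t(1) gen_mul.hyps(2)] .
  next
    case (gen_inv f g)
    then obtain t where t: "t \<in> \<S>" "f = fst t" by blast
    have "fst (\<phi> t) \<in> fst ` \<Sigma>" using phiT[OF t(1)] by blast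
    then have "restrict (inv_into {0..1} (fst (\<phi> t)) \<circ> C g) {0..1} \<in> gen_group (fst ` \<Sigma>)"
      by (rule gen_group.gen_inv[OF _ gen_inv.IH])
    then show ?case unfolding t(2) cinv[OF t(1) gen_inv.hyps(2)] .
  qed
  have surjT: "\<Sigma> = \<phi> ` \<S>" using assms(6) by (simp add: bij_betw_def)
  have sub: "g' \<in> C ` gen_group (fst ` \<S>)" if "g' \<in> gen_group (fst ` \<Sigma>)" for g'
    using that
  proof (induction rule: gen_group.induct)
    case gen_id then show ?case using cid gen_group.gen_id by (metis image_eqI)
  next
    case (gen_mul f g')
    then obtain t where t: "t \<in> \<S>" "f = fst (\<phi> t)" using surjT by blast
    obtain g where g: "g \<in> gen_group (fst ` \<S>)" "g' = C g" using gen_mul.IH by blast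
    have "restrict (fst t \<circ> g) {0..1} \<in> gen_group (fst ` \<S>)"
      using gen_group.gen_mul[OF _ g(1)] t(1) by blast
    moreover have "restrict (f \<circ> g') {0..1} = C (restrict (fst t \<circ> g) {0..1})"
      using cmul[OF t(1) g(1)] t(2) g(2) by simp
    ultimately show ?case by blast
  next
    case (gen_inv f g')
    then obtain t where t: "t \<in> \<S>" "f = fst (\<phi> t)" using surjT by blast
    obtain g where g: "g \<in> gen_group (fst ` \<S>)" "g' = C g" using gen_inv.IH by blast
    have "restrict (inv_into {0..1} (fst t) \<circ> g) {0..1} \<in> gen_group (fst ` \<S>)"
      using gen_group.gen_inv[OF _ g(1)] t(1) by blast
    moreover have "restrict (inv_into {0..1} f \<circ> g') {0..1} = C (restrict (inv_into {0..1} (fst t) \<circ> g) {0..1})"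
      using cinv[OF t(1) g(1)] t(2) g(2) by simp
    ultimately show ?case by blast
  qed
  have "gen_group (fst ` \<Sigma>) = C ` gen_group (fst ` \<S>)" using sup sub by blast
  then show ?thesis using hom P1 unfolding C_def by blast
qed


end
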